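(* Let $n,k$ be integers with $1\le k\le n<2k$ and set $\delta_k=\frac{1}{3k}$. There is a constant $M_0$ depending only on $n,k$ such that for every $\kappa=(\kappa_1,\dots,\kappa_n)\in\Gamma_k$ whose maximum entry $\kappa_1$ satisfies $\kappa_1\ge M_0$, and all indices $i\ne l$, $$(2-\delta_k)e^{\kappa_l}\sigma_{k-2}(\kappa|il)+(2-\delta_k)\frac{e^{\kappa_l}-e^{\kappa_i}}{\kappa_l-\kappa_i}\sigma_{k-1}(\kappa|l)\ge\frac{e^{\kappa_l}}{\kappa_1}\sigma_{k-1}(\kappa|i).$$
   Context: $\sigma_m$ is the $m$-th elementary symmetric function ($\sigma_0=1$, $\sigma_m=0$ for $m<0$); $\Gamma_k=\{\kappa\in\mathbb{R}^n:\sigma_m(\kappa)>0,\ m=1,\dots,k\}$; $(\kappa|ab)$ denotes $\kappa$ with the entries of indices $a,b$ deleted and $\sigma_m(\kappa|ab)=\sigma_m((\kappa|ab))$. When $\kappa_l=\kappa_i$, the difference quotient $\frac{e^{\kappa_l}-e^{\kappa_i}}{\kappa_l-\kappa_i}$ is interpreted as its limit $e^{\kappa_i}$. *)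

theory Defs
  imports Complex_Main
begin

definition esym :: "int \<Rightarrow> (nat \<Rightarrow> real) \<Rightarrow> nat set \<Rightarrow> real" where
  "esym m \<kappa> I = (if m < 0 then 0
     else (\<Sum>S\<in>{S. S \<subseteq> I \<and> card S = nat m}. \<Prod>j\<in>S. \<kappa> j))"

definition Gamma :: "nat \<Rightarrow> nat \<Rightarrow> (nat \<Rightarrow> real) \<Rightarrow> bool" where
  "Gamma n k \<kappa> \<longleftrightarrow> (\<forall>m\<in>{1..k}. esym (int m) \<kappa> {1..n} > 0)"

definition expdq :: "real \<Rightarrow> real \<Rightarrow> real" where
  "expdq a b = (if a = b then exp b else (exp a - exp b) / (a - b))"

end

theory Submission
  imports Defs "HOL-Computational_Algebra.Polynomial"
begin

fun e :: "nat \<Rightarrow> real list \<Rightarrow> real" where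
  "e 0 ys = 1"
| "e (Suc m) [] = 0"
| "e (Suc m) (y # ys) = e (Suc m) ys + y * e m ys"

lemma e_big: "m > length ys \<Longrightarrow> e m ys = 0"
proof (induction ys arbitrary: m)
  case Nil thus ?case by (cases m) auto
next
  case (Cons y ys) thus ?case by (cases m) auto
qed

definition PP :: "real list \<Rightarrow> real poly" where
  "PP ys = prod_list (map (\<lambda>y. [:y, 1:]) ys)"

lemma PP_Cons: "PP (y # ys) = [:y, 1:] * PP ys"
  by (simp add: PP_def)

lemma PP_nz: "PP ys \<noteq> 0"
proof (induction ys)
  case Nil thus ?case by (simp add: PP_def)
next
  case (Cons y ys) thus ?case unfolding PP_Cons by (simp del: mult_pCons_left)
qed

lemma degree_PP: "degree (PP ys) = length ys"
proof (induction ys)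
  case Nil thus ?case by (simp add: PP_def)
next
  case (Cons y ys)
  have "degree ([:y, 1:] * PP ys) = degree [:y,1:] + degree (PP ys)"
    by (rule degree_mult_eq) (auto simp: PP_nz)
  thus ?case using Cons by (simp add: PP_Cons)
qed

lemma poly_PP: "poly (PP ys) x = prod_list (map (\<lambda>y. x + y) ys)"
  by (induction ys) (simp_all add: PP_def distrib_right)

lemma coeff_PP: "i \<le> length ys \<Longrightarrow> coeff (PP ys) i = e (length ys - i) ys"
proof (induction ys arbitrary: i)
  case Nil thus ?case by (simp add: PP_def)
next
  case (Cons y ys)
  have hi: "coeff (PP ys) j = 0" if "j > length ys" for j
    using that degree_PP[of ys] by (simp add: coeff_eq_0)
  have c: "coeff (PP (y # ys)) i = y * coeff (PP ys) i + (if i = 0 then 0 else coeff (PP ys) (i - 1))"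
    by (cases i) (auto simp: PP_Cons)
  show ?case
  proof (cases "i = Suc (length ys)")
    case True
    thus ?thesis using c hi[of i] Cons.IH[of "length ys"] by simp
  next
    case False
    hence il: "i \<le> length ys" using Cons.prems by simp
    have eq: "length (y # ys) - i = Suc (length ys - i)" using il by simp
    show ?thesis
    proof (cases i)
      case 0
      thus ?thesis using c Cons.IH[of 0] e_big[of ys "Suc (length ys)"] by simp
    next
      case (Suc i')
      thus ?thesis using c Cons.IH[of i] Cons.IH[of i'] il eq
        by (simp add: Suc_diff_le)
    qed
  qed
qed

lemma deriv_roots:
  assumes dys: "distinct ys" and lys: "length ys = Suc N"
  shows "\<exists>zs. distinct zs \<and> length zs = N \<and>
           (\<forall>j\<le>N. real (Suc N) * e j zs = real (Suc N - j) * e j ys)"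
proof -
  define P where "P = PP ys"
  define a where "a = sorted_list_of_set (uminus ` set ys)"
  have fin: "finite (uminus ` set ys)" by simp
  have "card (uminus ` set ys) = card (set ys)"
    by (rule card_image) (auto simp: inj_on_def)
  hence la: "length a = Suc N" using dys lys
    by (simp add: a_def distinct_card)
  have sa: "sorted_wrt (<) a" unfolding a_def by (rule strict_sorted_list_of_set)
  have seta: "set a = uminus ` set ys" unfolding a_def using fin by simp
  have roots: "poly P (a ! j) = 0" if "j < Suc N" for j
  proof -
    have "a ! j \<in> set a" using that la by simp
    then obtain y where y: "y \<in> set ys" "a ! j = - y" using seta by auto
    have "0 \<in> set (map (\<lambda>z. a ! j + z) ys)" using y by force
    thus ?thesis by (simp add: P_def poly_PP prod_list_zero_iff)
  qed
  have "\<forall>j<N. \<exists>x. a ! j < x \<and> x < a ! Suc j \<and> poly (pderiv P) x = 0"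
  proof (intro allI impI)
    fix j assume j: "j < N"
    have lt: "a ! j < a ! Suc j" using sorted_wrt_nth_less[OF sa, of j "Suc j"] j la by simp
    from poly_MVT[OF lt, of P] obtain x where
      x: "a ! j < x" "x < a ! Suc j" "poly P (a ! Suc j) - poly P (a ! j) = (a ! Suc j - a ! j) * poly (pderiv P) x"
      by blast
    have "poly (pderiv P) x = 0" using x(3) roots[of j] roots[of "Suc j"] j lt by simp
    thus "\<exists>x. a ! j < x \<and> x < a ! Suc j \<and> poly (pderiv P) x = 0" using x by blast
  qed
  then obtain r where r: "\<And>j. j < N \<Longrightarrow> a ! j < r j \<and> r j < a ! Suc j \<and> poly (pderiv P) (r j) = 0"
    by metis
  have rmono: "r j < r j'" if "j < j'" "j' < N" for j j'
  proof -
    have "a ! Suc j \<le> a ! j'"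
    proof (cases "Suc j = j'")
      case True thus ?thesis by simp
    next
      case False
      thus ?thesis using sorted_wrt_nth_less[OF sa, of "Suc j" j'] that la by simp
    qed
    thus ?thesis using r[of j] r[of j'] that by simp
  qed
  have rinj: "inj_on r {..<N}"
    by (rule inj_onI) (metis lessThan_iff nat_neq_iff rmono order_less_irrefl)
  define zs where "zs = map (\<lambda>j. - r j) [0..<N]"
  have dzs: "distinct zs" unfolding zs_def distinct_map
    using rinj by (auto simp: inj_on_def)
  have lzs: "length zs = N" by (simp add: zs_def)
  define Q where "Q = smult (real (Suc N)) (PP zs)"
  have "pderiv P = Q"
  proof (rule poly_eqI_degree_lead_coeff[where n = N and A = "r ` {..<N}"])
    show "coeff (pderiv P) N = coeff Q N"
      using coeff_PP[of "Suc N" ys] coeff_PP[of N zs] lys lzs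
      by (simp add: coeff_pderiv Q_def P_def)
    show "N \<le> card (r ` {..<N})" using card_image[OF rinj] by simp
    show "degree (pderiv P) \<le> N" by (simp add: degree_pderiv P_def degree_PP lys)
    show "degree Q \<le> N" by (simp add: Q_def degree_PP lzs)
    fix z assume "z \<in> r ` {..<N}"
    then obtain j where j: "j < N" "z = r j" by auto
    have "0 \<in> set (map (\<lambda>y. z + y) zs)" using j by (force simp: zs_def)
    hence "poly Q z = 0" by (simp add: Q_def poly_PP prod_list_zero_iff)
    thus "poly (pderiv P) z = poly Q z" using r[of j] j by simp
  qed
  have "real (Suc N) * e j zs = real (Suc N - j) * e j ys" if j: "j \<le> N" for j
  proof -
    have "coeff (pderiv P) (N - j) = coeff Q (N - j)" using \<open>pderiv P = Q\<close> by simp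
    moreover have "coeff (pderiv P) (N - j) = real (Suc N - j) * e j ys"
      using coeff_PP[of "Suc (N - j)" ys] lys j
      by (simp add: coeff_pderiv P_def Suc_diff_le)
    moreover have "coeff Q (N - j) = real (Suc N) * e j zs"
      using coeff_PP[of "N - j" zs] lzs j by (simp add: Q_def)
    ultimately show ?thesis by simp
  qed
  thus ?thesis using dzs lzs by blast
qed

lemma e_len: "e (length ys) ys = prod_list ys"
  by (induction ys) (auto simp: e_big)

lemma e_inverse:
  assumes "0 \<notin> set ys" "j \<le> length ys"
  shows "e j (map inverse ys) * prod_list ys = e (length ys - j) ys"
  using assms
proof (induction ys arbitrary: j)
  case Nil thus ?case by simp
next
  case (Cons y ys)
  have y0: "y \<noteq> 0" using Cons.prems by auto
  have ys0: "0 \<notin> set ys" using Cons.prems by auto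
  show ?case
  proof (cases j)
    case 0
    thus ?thesis using e_len[of ys] e_big[of ys "Suc (length ys)"] by simp
  next
    case (Suc j')
    show ?thesis
    proof (cases "j' < length ys")
      case True
      have IH1: "e (Suc j') (map inverse ys) * prod_list ys = e (length ys - Suc j') ys"
        using Cons.IH[OF ys0, of "Suc j'"] True by simp
      have IH2: "e j' (map inverse ys) * prod_list ys = e (length ys - j') ys"
        using Cons.IH[OF ys0, of j'] True by simp
      have eq: "length ys - j' = Suc (length ys - Suc j')" using True by simp
      have "e j (map inverse (y # ys)) * prod_list (y # ys)
          = y * (e (Suc j') (map inverse ys) * prod_list ys) + (y * inverse y) * (e j' (map inverse ys) * prod_list ys)"
        using Suc by (simp add: algebra_simps)
      also have "\<dots> = y * e (length ys - Suc j') ys + e (length ys - j') ys"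
        using IH1 IH2 y0 by simp
      also have "\<dots> = e (length (y # ys) - j) (y # ys)"
        using Suc eq by simp
      finally show ?thesis .
    next
      case False
      hence jl: "j' = length ys" using Cons.prems Suc by simp
      have IH2: "e j' (map inverse ys) * prod_list ys = e 0 ys"
        using Cons.IH[OF ys0, of j'] jl by simp
      have "e j (map inverse (y # ys)) * prod_list (y # ys)
          = y * (e (Suc j') (map inverse ys) * prod_list ys) + (y * inverse y) * (e j' (map inverse ys) * prod_list ys)"
        using Suc by (simp add: algebra_simps)
      also have "\<dots> = 1"
        using IH2 y0 e_big[of "map inverse ys" "Suc j'"] jl by simp
      finally show ?thesis using Suc jl by simp
    qed
  qed
qed

definition E :: "nat \<Rightarrow> real list \<Rightarrow> real" where
  "E j ys = e j ys / real (length ys choose j)"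

lemma deriv_E:
  assumes "distinct ys" "length ys = Suc N"
  shows "\<exists>zs. distinct zs \<and> length zs = N \<and> (\<forall>j\<le>N. E j zs = E j ys)"
proof -
  obtain zs where zs: "distinct zs" "length zs = N"
     "\<And>j. j\<le>N \<Longrightarrow> real (Suc N) * e j zs = real (Suc N - j) * e j ys"
    using deriv_roots[OF assms] by blast
  have "E j zs = E j ys" if j: "j \<le> N" for j
  proof -
    have b: "real (Suc N - j) * real (Suc N choose j) = real (Suc N) * real (N choose j)"
      using binomial_absorb_comp[of "Suc N" j] by (metis diff_Suc_1 of_nat_mult)
    have pos1: "real (N choose j) > 0" using j by simp
    have pos2: "real (Suc N choose j) > 0" using j by simp
    have pos3: "real (Suc N - j) > 0" using j by simp
    have "e j zs = real (Suc N - j) * e j ys / real (Suc N)"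
      using zs(3)[OF j] by (simp add: field_simps)
    hence "E j zs = real (Suc N - j) * e j ys / (real (Suc N) * real (N choose j))"
      unfolding E_def using zs(2) by simp
    also have "\<dots> = real (Suc N - j) * e j ys / (real (Suc N - j) * real (Suc N choose j))"
      using b by simp
    also have "\<dots> = e j ys / real (Suc N choose j)"
      using pos3 by simp
    finally show ?thesis unfolding E_def using assms(2) by simp
  qed
  thus ?thesis using zs by blast
qed

lemma deriv_E_iter:
  assumes "distinct ys" "p \<le> length ys"
  shows "\<exists>ws. distinct ws \<and> length ws = p \<and> (\<forall>j\<le>p. E j ws = E j ys)"
  using assms
proof (induction "length ys - p" arbitrary: ys)
  case 0
  hence "length ys = p" by simp
  thus ?case using 0 by blast
next
  case (Suc d)
  then obtain N where N: "length ys = Suc N" by (cases "length ys") auto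
  obtain zs where zs: "distinct zs" "length zs = N" "\<forall>j\<le>N. E j zs = E j ys"
    using deriv_E[OF Suc.prems(1) N] by blast
  have "d = length zs - p" "p \<le> length zs" using Suc.hyps(2) Suc.prems N zs(2) by auto
  from Suc.hyps(1)[OF this(1) zs(1) this(2)] obtain ws where
    "distinct ws" "length ws = p" "\<forall>j\<le>p. E j ws = E j zs" by blast
  thus ?case using zs(3) \<open>p \<le> length zs\<close> zs(2) by auto
qed

lemma E_two: "length us = 2 \<Longrightarrow> E 2 us \<le> (E 1 us)^2"
proof -
  assume "length us = 2"
  then obtain a b where us: "us = [a, b]"
    by (metis One_nat_def Suc_1 length_0_conv length_Suc_conv)
  have "a * b \<le> ((a + b) / 2)^2"
    using sum_squares_ge_zero[of "a - b" 0] by (simp add: power2_eq_square field_simps)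
  thus ?thesis by (simp add: us E_def numeral_2_eq_2, simp add: add.commute)
qed

lemma newton_distinct:
  assumes dys: "distinct ys" and m1: "1 \<le> m" and ml: "Suc m \<le> length ys"
  shows "E (m - 1) ys * E (Suc m) ys \<le> (E m ys)^2"
proof -
  obtain ws where ws: "distinct ws" "length ws = Suc m" "\<forall>j\<le>Suc m. E j ws = E j ys"
    using deriv_E_iter[OF dys ml] by blast
  have red: "E (m - 1) ys * E (Suc m) ys = E (m - 1) ws * E (Suc m) ws"
     "E m ys = E m ws" using ws(3) by auto
  define P where "P = prod_list ws"
  have eP: "e (Suc m) ws = P" unfolding P_def using e_len[of ws] ws(2) by simp
  have EP: "E (Suc m) ws = P" unfolding E_def using eP ws(2) by simp
  have "E (m - 1) ws * E (Suc m) ws \<le> (E m ws)^2"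
  proof (cases "0 \<in> set ws")
    case True
    hence "P = 0" by (simp add: P_def prod_list_zero_iff)
    thus ?thesis using EP by simp
  next
    case False
    hence P0: "P \<noteq> 0" by (simp add: P_def prod_list_zero_iff)
    define vs where "vs = map inverse ws"
    have dvs: "distinct vs" unfolding vs_def distinct_map using ws(1)
      by (auto simp: inj_on_def)
    have lvs: "length vs = Suc m" using ws(2) by (simp add: vs_def)
    obtain us where us: "distinct us" "length us = 2" "\<forall>j\<le>2. E j us = E j vs"
      using deriv_E_iter[OF dvs, of 2] lvs m1 by auto
    have key: "E 2 vs \<le> (E 1 vs)^2" using E_two[OF us(2)] us(3) by simp
    have i1: "e 1 vs * P = e m ws" using e_inverse[OF False, of 1] ws(2) m1
      by (simp add: vs_def P_def)
    have i2: "e 2 vs * P = e (m - 1) ws" using e_inverse[OF False, of 2] ws(2) m1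
      by (simp add: vs_def P_def)
    have c2: "(Suc m choose (m - 1)) = (Suc m choose 2)"
      using binomial_symmetric[of 2 "Suc m"] m1 by simp
    have "E (m - 1) ws * E (Suc m) ws = P^2 * E 2 vs"
      unfolding E_def using ws(2) lvs c2 i2[symmetric] eP by (simp add: power2_eq_square)
    also have "\<dots> \<le> P^2 * (E 1 vs)^2" by (rule mult_left_mono[OF key]) simp
    also have "\<dots> = (E m ws)^2"
      unfolding E_def using ws(2) lvs i1[symmetric] by (simp add: power2_eq_square)
    finally show ?thesis .
  qed
  thus ?thesis using red by simp
qed

fun pert :: "real \<Rightarrow> real list \<Rightarrow> real list" where
  "pert t [] = []"
| "pert t (y # ys) = (y + t * real (length ys)) # pert t ys"

lemma length_pert [simp]: "length (pert t ys) = length ys"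
  by (induction ys) auto

lemma pert_tendsto: "((\<lambda>t. e m (pert t ys)) \<longlongrightarrow> e m ys) (at_right 0)"
proof (induction ys arbitrary: m)
  case Nil thus ?case by (cases m) auto
next
  case (Cons y ys)
  show ?case
  proof (cases m)
    case 0 thus ?thesis by simp
  next
    case (Suc m')
    have l: "((\<lambda>t. y + t * real (length ys)) \<longlongrightarrow> y + 0 * real (length ys)) (at_right 0)"
      by (intro tendsto_intros)
    have "((\<lambda>t. e (Suc m') (pert t ys) + (y + t * real (length ys)) * e m' (pert t ys))
           \<longlongrightarrow> e (Suc m') ys + (y + 0 * real (length ys)) * e m' ys) (at_right 0)"
      by (intro tendsto_add tendsto_mult Cons.IH l)
    thus ?thesis using Suc by simp
  qed
qed

lemma pert_mem: "x \<in> set (pert t ys) \<Longrightarrow> \<exists>y\<in>set ys. \<exists>c<length ys. x = y + t * real c"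
proof (induction ys)
  case Nil thus ?case by simp
next
  case (Cons y ys)
  show ?case
  proof (cases "x = y + t * real (length ys)")
    case True thus ?thesis by auto
  next
    case False
    hence "x \<in> set (pert t ys)" using Cons.prems by simp
    from Cons.IH[OF this] obtain y' c where "y' \<in> set ys" "c < length ys" "x = y' + t * real c" by blast
    thus ?thesis by (intro bexI[of _ y'] exI[of _ c]) auto
  qed
qed

lemma pert_distinct: "eventually (\<lambda>t. distinct (pert t ys)) (at_right (0::real))"
proof (induction ys)
  case Nil thus ?case by simp
next
  case (Cons y ys)
  define N where "N = length ys"
  have fin: "finite (set ys \<times> {..<N})" by simp
  have ev1: "eventually (\<lambda>t. \<forall>p\<in>set ys \<times> {..<N}. t \<noteq> (fst p - y) / (real N - real (snd p))) (at_right (0::real))"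
    by (rule eventually_ball_finite[OF fin]) (auto intro: eventually_neq_at_within)
  have ev2: "eventually (\<lambda>t. 0 < t) (at_right (0::real))" by (rule eventually_at_right_less)
  have "eventually (\<lambda>t. y + t * real N \<notin> set (pert t ys)) (at_right (0::real))"
    using ev1 ev2
  proof eventually_elim
    case (elim t)
    show ?case
    proof
      assume "y + t * real N \<in> set (pert t ys)"
      from pert_mem[OF this] obtain y' c where yc: "y' \<in> set ys" "c < N" "y + t * real N = y' + t * real c"
        unfolding N_def by blast
      have pos: "real N - real c > 0" using yc(2) by simp
      have "t * (real N - real c) = y' - y" using yc(3) by (simp add: algebra_simps)
      hence "t = (y' - y) / (real N - real c)" using pos by (simp add: field_simps)
      thus False using elim(1) yc(1,2) by auto
    qed
  qed
  with Cons.IH show ?case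
    by eventually_elim (simp add: N_def)
qed

lemma newton_E:
  assumes m1: "1 \<le> m"
  shows "E (m - 1) ys * E (Suc m) ys \<le> (E m ys)^2"
proof (cases "Suc m \<le> length ys")
  case False
  hence "e (Suc m) ys = 0" by (intro e_big) simp
  thus ?thesis by (simp add: E_def)
next
  case True
  define L where "L = length ys"
  have Et: "((\<lambda>t. E j (pert t ys)) \<longlongrightarrow> E j ys) (at_right 0)" for j
    unfolding E_def length_pert divide_inverse by (intro tendsto_mult pert_tendsto tendsto_const)
  have ev: "eventually (\<lambda>t. E (m - 1) (pert t ys) * E (Suc m) (pert t ys) \<le> (E m (pert t ys))^2) (at_right (0::real))"
    using pert_distinct[of ys]
  proof eventually_elim
    case (elim t)
    show ?case by (rule newton_distinct[OF elim m1]) (use True in simp)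
  qed
  show ?thesis
    by (rule tendsto_le[OF _ tendsto_power[OF Et] tendsto_mult[OF Et Et] ev]) simp
qed

lemma binom_ratio: "Suc k * (n choose Suc k) = (n - k) * (n choose k)"
  using times_binomial_minus1_eq[of "Suc k" n] binomial_absorb_comp[of n k] by simp

lemma binom_logconc: "(N choose m) * (N choose Suc (Suc m)) \<le> (N choose Suc m)^2"
proof (cases "m < N")
  case False
  hence "N choose Suc (Suc m) = 0" by (intro binomial_eq_0) simp
  thus ?thesis by (metis mult_0_right zero_le)
next
  case True
  define a where "a = N choose m"
  define b where "b = N choose Suc m"
  define c where "c = N choose Suc (Suc m)"
  have r1: "Suc m * b = (N - m) * a" unfolding a_def b_def by (rule binom_ratio)
  have r2: "Suc (Suc m) * c = (N - Suc m) * b" unfolding c_def b_def by (rule binom_ratio)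
  have "(a * c) * (Suc (Suc m) * (N - m)) = ((N - m) * a) * (Suc (Suc m) * c)" by (simp add: algebra_simps)
  also have "\<dots> = (Suc m * b) * ((N - Suc m) * b)" using r1 r2 by simp
  also have "\<dots> = (b * b) * (Suc m * (N - Suc m))" by (simp add: algebra_simps)
  also have "\<dots> \<le> (b * b) * (Suc (Suc m) * (N - m))"
    by (intro mult_left_mono mult_mono) auto
  finally have calc: "(a * c) * (Suc (Suc m) * (N - m)) \<le> (b * b) * (Suc (Suc m) * (N - m))" .
  have pos: "Suc (Suc m) * (N - m) > 0" using True by simp
  have "a * c \<le> b * b" using calc pos mult_le_cancel2 by blast
  thus ?thesis unfolding a_def b_def c_def by (simp add: power2_eq_square)
qed

lemma esym_neg: "m < 0 \<Longrightarrow> esym m \<kappa> I = 0"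
  by (simp add: esym_def)

lemma esym_zero: "finite I \<Longrightarrow> esym 0 \<kappa> I = 1"
proof -
  assume "finite I"
  hence "{S. S \<subseteq> I \<and> card S = 0} = {{}}" using finite_subset by fastforce
  thus ?thesis by (simp add: esym_def)
qed

lemma esym_big: "finite I \<Longrightarrow> m > int (card I) \<Longrightarrow> esym m \<kappa> I = 0"
proof -
  assume f: "finite I" and m: "m > int (card I)"
  have "{S. S \<subseteq> I \<and> card S = nat m} = {}"
  proof (intro equalityI subsetI)
    fix S assume "S \<in> {S. S \<subseteq> I \<and> card S = nat m}"
    hence "S \<subseteq> I" "card S = nat m" by auto
    hence "card S \<le> card I" "card S = nat m" using card_mono[OF f, of S] by auto
    thus "S \<in> {}" using m by simp
  qed simp
  moreover have "\<not> m < 0" using m by simp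
  ultimately show ?thesis unfolding esym_def by (simp only: if_False sum.empty)
qed

lemma esym_insert:
  assumes f: "finite I" and a: "a \<notin> I"
  shows "esym m \<kappa> (insert a I) = esym m \<kappa> I + \<kappa> a * esym (m - 1) \<kappa> I"
proof (cases "m \<le> 0")
  case True
  show ?thesis
  proof (cases "m = 0")
    case True thus ?thesis using f by (simp add: esym_zero esym_neg)
  next
    case False thus ?thesis using \<open>m \<le> 0\<close> by (simp add: esym_neg)
  qed
next
  case False
  define m' where "m' = nat m - 1"
  have m': "m = int (Suc m')" using False by (simp add: m'_def)
  have split: "{S. S \<subseteq> insert a I \<and> card S = Suc m'} =
       {S. S \<subseteq> I \<and> card S = Suc m'} \<union> insert a ` {S. S \<subseteq> I \<and> card S = m'}"
  proof (intro equalityI subsetI)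
    fix S assume S: "S \<in> {S. S \<subseteq> insert a I \<and> card S = Suc m'}"
    show "S \<in> {S. S \<subseteq> I \<and> card S = Suc m'} \<union> insert a ` {S. S \<subseteq> I \<and> card S = m'}"
    proof (cases "a \<in> S")
      case True
      have "S - {a} \<subseteq> I" using S by auto
      moreover have "card (S - {a}) = m'" using S True by (simp add: card_Diff_singleton)
      moreover have "S = insert a (S - {a})" using True by auto
      ultimately show ?thesis by blast
    next
      case False thus ?thesis using S by auto
    qed
  next
    fix S assume "S \<in> {S. S \<subseteq> I \<and> card S = Suc m'} \<union> insert a ` {S. S \<subseteq> I \<and> card S = m'}"
    thus "S \<in> {S. S \<subseteq> insert a I \<and> card S = Suc m'}"
    proof
      assume "S \<in> {S. S \<subseteq> I \<and> card S = Suc m'}" thus ?thesis by auto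
    next
      assume "S \<in> insert a ` {S. S \<subseteq> I \<and> card S = m'}"
      then obtain T where T: "T \<subseteq> I" "card T = m'" "S = insert a T" by auto
      have "finite T" using T(1) f by (rule finite_subset)
      moreover have "a \<notin> T" using T(1) a by auto
      ultimately have "card S = Suc m'" using T by simp
      thus ?thesis using T by auto
    qed
  qed
  have fin1: "finite {S. S \<subseteq> I \<and> card S = Suc m'}" using f by simp
  have fin2: "finite (insert a ` {S. S \<subseteq> I \<and> card S = m'})" using f by simp
  have disj: "{S. S \<subseteq> I \<and> card S = Suc m'} \<inter> insert a ` {S. S \<subseteq> I \<and> card S = m'} = {}"
    using a by blast
  have inj: "inj_on (insert a) {S. S \<subseteq> I \<and> card S = m'}"
  proof (rule inj_onI)
    fix x y assume xy: "x \<in> {S. S \<subseteq> I \<and> card S = m'}" "y \<in> {S. S \<subseteq> I \<and> card S = m'}"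
      "insert a x = insert a y"
    have "a \<notin> x" "a \<notin> y" using xy(1,2) a by auto
    hence "x = insert a x - {a}" "y = insert a y - {a}" by auto
    thus "x = y" using xy(3) by simp
  qed
  have nm: "nat m = Suc m'" "nat (m - 1) = m'" "\<not> m < 0" "\<not> m - 1 < 0" using m' by auto
  have E1: "esym m \<kappa> J = (\<Sum>S\<in>{S. S \<subseteq> J \<and> card S = Suc m'}. \<Prod>j\<in>S. \<kappa> j)" for J
    unfolding esym_def using nm by simp
  have E0: "esym (m - 1) \<kappa> J = (\<Sum>S\<in>{S. S \<subseteq> J \<and> card S = m'}. \<Prod>j\<in>S. \<kappa> j)" for J
    unfolding esym_def using nm by simp
  have "esym m \<kappa> (insert a I) = (\<Sum>S\<in>{S. S \<subseteq> insert a I \<and> card S = Suc m'}. \<Prod>j\<in>S. \<kappa> j)"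
    by (rule E1)
  also have "\<dots> = (\<Sum>S\<in>{S. S \<subseteq> I \<and> card S = Suc m'}. \<Prod>j\<in>S. \<kappa> j)
       + (\<Sum>S\<in>insert a ` {S. S \<subseteq> I \<and> card S = m'}. \<Prod>j\<in>S. \<kappa> j)"
    unfolding split by (rule sum.union_disjoint[OF fin1 fin2 disj])
  also have "(\<Sum>S\<in>insert a ` {S. S \<subseteq> I \<and> card S = m'}. \<Prod>j\<in>S. \<kappa> j)
       = (\<Sum>S\<in>{S. S \<subseteq> I \<and> card S = m'}. \<Prod>j\<in>insert a S. \<kappa> j)"
    by (rule sum.reindex[OF inj, unfolded comp_def])
  also have "\<dots> = (\<Sum>S\<in>{S. S \<subseteq> I \<and> card S = m'}. \<kappa> a * (\<Prod>j\<in>S. \<kappa> j))"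
  proof (rule sum.cong[OF refl])
    fix S assume "S \<in> {S. S \<subseteq> I \<and> card S = m'}"
    hence "S \<subseteq> I" by simp
    hence "finite S" "a \<notin> S" using f a by (auto intro: finite_subset)
    thus "(\<Prod>j\<in>insert a S. \<kappa> j) = \<kappa> a * (\<Prod>j\<in>S. \<kappa> j)" by simp
  qed
  also have "\<dots> = \<kappa> a * esym (m - 1) \<kappa> I"
    unfolding E0 by (simp add: sum_distrib_left)
  finally show ?thesis unfolding E1 .
qed

lemma esym_list: "distinct xs \<Longrightarrow> esym (int m) \<kappa> (set xs) = e m (map \<kappa> xs)"
proof (induction xs arbitrary: m)
  case Nil
  show ?case
  proof (cases m)
    case 0 thus ?thesis by (simp add: esym_zero)
  next
    case (Suc m') thus ?thesis using esym_big[of "{}" "int m" \<kappa>] by simp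
  qed
next
  case (Cons x xs)
  show ?case
  proof (cases m)
    case 0 thus ?thesis by (simp add: esym_zero)
  next
    case (Suc m')
    have "esym (int m) \<kappa> (set (x # xs)) = esym (int m) \<kappa> (set xs) + \<kappa> x * esym (int m - 1) \<kappa> (set xs)"
      using Cons.prems by (simp add: esym_insert)
    also have "int m - 1 = int m'" using Suc by simp
    finally show ?thesis using Cons.IH[of m] Cons.IH[of m'] Suc Cons.prems by (simp del: of_nat_Suc)
  qed
qed

lemma esym_as_list:
  assumes "finite J"
  shows "esym (int m) \<kappa> J = e m (map \<kappa> (sorted_list_of_set J))"
  using esym_list[of "sorted_list_of_set J" m \<kappa>] assms by simp

lemma newton_esym:
  assumes f: "finite J" and m1: "1 \<le> m"
  shows "esym (int (m - 1)) \<kappa> J / real (card J choose (m - 1)) * (esym (int (Suc m)) \<kappa> J / real (card J choose Suc m))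
     \<le> (esym (int m) \<kappa> J / real (card J choose m))^2"
  using newton_E[OF m1, of "map \<kappa> (sorted_list_of_set J)"] f
  by (simp add: E_def esym_as_list del: of_nat_Suc)

lemma newton_unnorm:
  assumes f: "finite J" and m1: "1 \<le> m"
     and p1: "esym (int (m - 1)) \<kappa> J > 0" and p2: "esym (int (Suc m)) \<kappa> J > 0"
  shows "esym (int (m - 1)) \<kappa> J * esym (int (Suc m)) \<kappa> J \<le> (esym (int m) \<kappa> J)^2"
proof -
  define N where "N = card J"
  define a where "a = esym (int (m - 1)) \<kappa> J"
  define b where "b = esym (int m) \<kappa> J"
  define c where "c = esym (int (Suc m)) \<kappa> J"
  define A where "A = real (N choose (m - 1))"
  define B where "B = real (N choose m)"
  define C where "C = real (N choose Suc m)"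
  have mN: "Suc m \<le> N"
  proof (rule ccontr)
    assume "\<not> Suc m \<le> N"
    hence "esym (int (Suc m)) \<kappa> J = 0" using f by (intro esym_big) (auto simp: N_def)
    thus False using p2 by simp
  qed
  have Ap: "A > 0" "B > 0" "C > 0" using mN by (auto simp: A_def B_def C_def)
  have lcn: "(N choose (m - 1)) * (N choose Suc m) \<le> (N choose m)^2"
    using binom_logconc[of N "m - 1"] m1 by simp
  have lc: "A * C \<le> B^2" unfolding A_def B_def C_def
    by (simp only: of_nat_mult[symmetric] of_nat_power[symmetric] of_nat_le_iff lcn)
  have nw: "a / A * (c / C) \<le> (b / B)^2"
    using newton_esym[OF f m1, of \<kappa>] unfolding a_def b_def c_def A_def B_def C_def N_def .
  have "a * c = (a / A * (c / C)) * (A * C)" using Ap by simp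
  also have "\<dots> \<le> (b / B)^2 * (A * C)"
    by (rule mult_right_mono[OF nw]) (use Ap in simp)
  also have "\<dots> \<le> (b / B)^2 * B^2"
    by (rule mult_left_mono[OF lc]) simp
  also have "\<dots> = b^2" using Ap by (simp add: power_divide)
  finally show ?thesis unfolding a_def b_def c_def .
qed

lemma rec_int:
  assumes "finite J" "i \<notin> J" "m \<ge> 1"
  shows "esym (int m) \<kappa> (insert i J) = esym (int m) \<kappa> J + \<kappa> i * esym (int (m - 1)) \<kappa> J"
proof -
  have h: "int (m - 1) = int m - 1" using assms(3) by simp
  show ?thesis unfolding h by (rule esym_insert[OF assms(1,2)])
qed

lemma G1:
  assumes f: "finite I" and i: "i \<in> I" and pos: "\<forall>m\<in>{1..k}. esym (int m) \<kappa> I > 0"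
  shows "\<forall>m<k. esym (int m) \<kappa> (I - {i}) > 0"
proof -
  define J where "J = I - {i}"
  have fJ: "finite J" using f by (simp add: J_def)
  have iJ: "i \<notin> J" by (simp add: J_def)
  have IJ: "I = insert i J" using i by (auto simp: J_def)
  have rec: "esym (int m) \<kappa> I = esym (int m) \<kappa> J + \<kappa> i * esym (int (m - 1)) \<kappa> J" if "m \<ge> 1" for m
    unfolding IJ by (rule rec_int[OF fJ iJ that])
  have "m < k \<Longrightarrow> esym (int m) \<kappa> J > 0" for m
  proof (induction m)
    case 0 thus ?case using fJ by (simp add: esym_zero)
  next
    case (Suc m')
    have IH: "esym (int m') \<kappa> J > 0" using Suc by simp
    show ?case
    proof (rule ccontr)
      assume "\<not> esym (int (Suc m')) \<kappa> J > 0"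
      hence neg: "esym (int (Suc m')) \<kappa> J \<le> 0" by simp
      have p1: "esym (int (Suc m')) \<kappa> I > 0" using bspec[OF pos, of "Suc m'"] Suc.prems by simp
      have S1: "esym (int (Suc m')) \<kappa> J + \<kappa> i * esym (int m') \<kappa> J > 0"
        using p1 rec[of "Suc m'"] by simp
      show False
      proof (cases "\<kappa> i \<le> 0")
        case True
        have "\<kappa> i * esym (int m') \<kappa> J \<le> 0" using True IH by (simp add: mult_nonpos_nonneg)
        thus False using S1 neg by simp
      next
        case False
        hence ki: "\<kappa> i > 0" by simp
        have p2: "esym (int (Suc (Suc m'))) \<kappa> I > 0" using bspec[OF pos, of "Suc (Suc m')"] Suc.prems by simp
        have S2: "esym (int (Suc (Suc m'))) \<kappa> J + \<kappa> i * esym (int (Suc m')) \<kappa> J > 0"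
          using p2 rec[of "Suc (Suc m')"] by simp
        define u where "u = - esym (int (Suc m')) \<kappa> J"
        define a where "a = esym (int m') \<kappa> J"
        define c where "c = esym (int (Suc (Suc m'))) \<kappa> J"
        have u0: "u \<ge> 0" using neg by (simp add: u_def)
        have h1: "u < \<kappa> i * a" using S1 by (simp add: u_def a_def)
        have h2: "\<kappa> i * u < c" using S2 by (simp add: u_def c_def)
        have a0: "a > 0" using IH by (simp add: a_def)
        have "\<kappa> i * u \<ge> 0" using ki u0 by simp
        hence c0: "c > 0" using h2 by linarith
        have nw0: "esym (int (Suc m' - 1)) \<kappa> J * esym (int (Suc (Suc m'))) \<kappa> J \<le> (esym (int (Suc m')) \<kappa> J)^2"
          by (rule newton_unnorm[OF fJ]) (use a0 c0 in \<open>simp_all add: a_def c_def\<close>)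
        have nw: "a * c \<le> u^2" using nw0 unfolding a_def c_def u_def by simp
        have "u * u \<le> u * (\<kappa> i * a)" using h1 u0 by (intro mult_left_mono) auto
        also have "\<dots> = a * (\<kappa> i * u)" by (simp add: algebra_simps)
        also have "\<dots> < a * c" using h2 a0 by (intro mult_strict_left_mono) auto
        finally have "u^2 < a * c" by (simp add: power2_eq_square)
        thus False using nw by simp
      qed
    qed
  qed
  thus ?thesis by (simp add: J_def)
qed

lemma esym1_le:
  assumes "finite J" "\<forall>j\<in>J. \<kappa> j \<le> M"
  shows "esym 1 \<kappa> J \<le> real (card J) * M"
  using assms
proof (induction J rule: finite_induct)
  case empty thus ?case using esym_big[of "{}" 1 \<kappa>] by simp
next
  case (insert a F)
  have "esym (int 1) \<kappa> (insert a F) = esym (int 1) \<kappa> F + \<kappa> a * esym (int 0) \<kappa> F"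
    using rec_int[OF insert(1,2), of 1 \<kappa>] by simp
  hence "esym 1 \<kappa> (insert a F) = esym 1 \<kappa> F + \<kappa> a" using esym_zero[OF insert(1)] by simp
  moreover have "card (insert a F) = Suc (card F)" using insert(1,2) by simp
  moreover have "esym 1 \<kappa> F \<le> real (card F) * M" using insert by simp
  moreover have "\<kappa> a \<le> M" using insert.prems by simp
  ultimately show ?case by (simp add: distrib_right)
qed

lemma G2:
  assumes f: "finite I" and i: "i \<in> I" and pos: "\<forall>m\<in>{1..k}. esym (int m) \<kappa> I > 0"
    and k1: "k \<ge> 1" and neg: "\<kappa> i < 0" and bd: "\<forall>j\<in>I. \<kappa> j \<le> M"
  shows "- \<kappa> i * real k < M * (real (card I) - real k)"
proof -
  define J where "J = I - {i}"
  have fJ: "finite J" using f by (simp add: J_def)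
  have iJ: "i \<notin> J" by (simp add: J_def)
  have IJ: "I = insert i J" using i by (auto simp: J_def)
  define m where "m = card J"
  have cI: "card I = Suc m" unfolding IJ m_def using fJ iJ by simp
  have posJ: "\<forall>j<k. esym (int j) \<kappa> J > 0" unfolding J_def by (rule G1[OF f i pos])
  define a where "a = - \<kappa> i"
  have a0: "a > 0" using neg by (simp add: a_def)
  define sk where "sk = esym (int k) \<kappa> J"
  define sk1 where "sk1 = esym (int (k - 1)) \<kappa> J"
  define s1 where "s1 = esym 1 \<kappa> J"
  have sk10: "sk1 > 0" unfolding sk1_def by (rule posJ[rule_format]) (use k1 in simp)
  have pk: "esym (int k) \<kappa> I > 0" using bspec[OF pos, of k] k1 by simp
  have "esym (int k) \<kappa> I = sk + \<kappa> i * sk1"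
    unfolding sk_def sk1_def IJ by (rule rec_int[OF fJ iJ k1])
  hence ask: "a * sk1 < sk" using pk by (simp add: a_def)
  have sk0: "sk > 0" using ask a0 sk10 by (smt (verit) mult_pos_pos)
  have km: "k \<le> m"
  proof (rule ccontr)
    assume "\<not> k \<le> m"
    hence "sk = 0" unfolding sk_def using fJ by (intro esym_big) (auto simp: m_def)
    thus False using sk0 by simp
  qed
  define Ee where "Ee j = esym (int j) \<kappa> J / real (m choose j)" for j
  have Epos: "Ee j > 0" if "j < k" for j
  proof -
    have "real (m choose j) > 0" using that km by simp
    thus ?thesis using posJ that by (simp add: Ee_def)
  qed
  have E0: "Ee 0 = 1" using fJ by (simp add: Ee_def esym_zero)
  have chain: "1 \<le> j \<Longrightarrow> j \<le> k \<Longrightarrow> Ee j \<le> Ee 1 * Ee (j - 1)" for j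
  proof (induction j)
    case 0 thus ?case by simp
  next
    case (Suc j)
    show ?case
    proof (cases "j = 0")
      case True thus ?thesis using E0 by simp
    next
      case False
      hence j1: "1 \<le> j" by simp
      have IH: "Ee j \<le> Ee 1 * Ee (j - 1)" using Suc j1 by simp
      have nw: "Ee (j - 1) * Ee (Suc j) \<le> (Ee j)^2"
        using newton_esym[OF fJ j1, of \<kappa>] unfolding Ee_def m_def .
      have p1: "Ee (j - 1) > 0" using Epos[of "j - 1"] Suc.prems j1 by simp
      have p2: "Ee j > 0" using Epos[of j] Suc.prems by simp
      have "Ee (j - 1) * Ee (Suc j) \<le> Ee j * Ee j" using nw by (simp add: power2_eq_square)
      also have "\<dots> \<le> Ee j * (Ee 1 * Ee (j - 1))" using IH p2 by (intro mult_left_mono) auto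
      also have "\<dots> = Ee (j - 1) * (Ee 1 * Ee j)" by (simp add: algebra_simps)
      finally have "Ee (Suc j) \<le> Ee 1 * Ee j" using p1 by simp
      thus ?thesis by simp
    qed
  qed
  have ch: "Ee k \<le> Ee 1 * Ee (k - 1)" using chain[OF k1 order_refl] .
  define K where "K = real (m choose k)"
  define K1 where "K1 = real (m choose (k - 1))"
  define r where "r = real (m - (k - 1))"
  have Kr: "real k * K = r * K1"
    using binom_ratio[of "k - 1" m] k1 unfolding K_def K1_def r_def
    by (metis Suc_diff_le diff_Suc_1 of_nat_mult)
  have K0: "K > 0" "K1 > 0" using km by (auto simp: K_def K1_def)
  have m0: "real m > 0" using km k1 by simp
  have r0: "r \<ge> 0" by (simp add: r_def)
  have "sk / K \<le> (s1 / real m) * (sk1 / K1)"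
    using ch unfolding Ee_def K_def K1_def sk_def sk1_def s1_def by simp
  hence "sk \<le> K * ((s1 / real m) * (sk1 / K1))" using K0 by (simp add: field_simps)
  also have "\<dots> = (s1 / real m) * sk1 * (K / K1)" using K0 by simp
  also have "K / K1 = r / real k" using Kr K0 k1 by (simp add: field_simps)
  finally have skb: "sk \<le> (s1 / real m) * (sk1 * r / real k)" by simp
  have s1b: "s1 \<le> real m * M"
    unfolding s1_def m_def by (rule esym1_le[OF fJ]) (use bd in \<open>auto simp: J_def\<close>)
  have "s1 / real m \<le> M" using s1b m0 by (simp add: field_simps)
  hence "(s1 / real m) * (sk1 * r / real k) \<le> M * (sk1 * r / real k)"
    using sk10 r0 k1 by (intro mult_right_mono) auto
  with skb ask have "a * sk1 < M * (sk1 * r / real k)" by linarith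
  hence "a * sk1 * real k < M * r * sk1" using k1 by (simp add: field_simps)
  hence "a * real k < M * r" using sk10 by (simp add: algebra_simps)
  moreover have "r = real (card I) - real k" using cI km k1 by (simp add: r_def)
  ultimately show ?thesis by (simp add: a_def)
qed

lemma expdq_ge: "a \<le> b \<Longrightarrow> expdq a b \<ge> exp a"
proof -
  assume ab: "a \<le> b"
  show ?thesis
  proof (cases "a = b")
    case True thus ?thesis by (simp add: expdq_def)
  next
    case False
    hence lt: "a < b" using ab by simp
    have "exp (b - a) \<ge> 1 + (b - a)" by (rule exp_ge_add_one_self)
    hence "exp a * exp (b - a) \<ge> exp a * (1 + (b - a))" by (intro mult_left_mono) auto
    hence "exp b \<ge> exp a * (1 + (b - a))" by (simp add: exp_diff)
    hence h: "exp b - exp a \<ge> exp a * (b - a)" by (simp add: algebra_simps)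
    have "expdq a b = (exp a - exp b) / (a - b)" using False by (simp add: expdq_def)
    also have "\<dots> = (exp b - exp a) / (b - a)" by (metis minus_diff_eq minus_divide_divide)
    also have "\<dots> \<ge> exp a" using h lt by (simp add: pos_le_divide_eq)
    finally show ?thesis .
  qed
qed

lemma expdq_gt: "b < a \<Longrightarrow> expdq a b * (1 + (a - b)) \<ge> exp a"
proof -
  assume ba: "b < a"
  define t where "t = a - b"
  have t0: "t > 0" using ba by (simp add: t_def)
  have "exp t \<ge> 1 + t" by (rule exp_ge_add_one_self)
  hence "exp b * exp t \<ge> exp b * (1 + t)" by (intro mult_left_mono) auto
  hence h: "exp a \<ge> exp b * (1 + t)" by (simp add: t_def exp_diff)
  have "expdq a b = (exp a - exp b) / t" using ba by (simp add: expdq_def t_def)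
  moreover have "(exp a - exp b) / t * (1 + t) \<ge> exp a"
  proof -
    have "exp a * t \<le> (exp a - exp b) * (1 + t)" using h by (simp add: algebra_simps)
    hence "exp a \<le> (exp a - exp b) * (1 + t) / t" using t0 by (simp add: pos_le_divide_eq)
    thus ?thesis by (simp add: mult.commute times_divide_eq_left)
  qed
  ultimately show ?thesis by (simp add: t_def)
qed

theorem lemma3p1:
  fixes n k :: nat
  assumes "1 \<le> k" and "k \<le> n" and "n < 2 * k"
  shows "\<exists>M0::real. \<forall>\<kappa>::nat \<Rightarrow> real. \<forall>i l.
     Gamma n k \<kappa> \<longrightarrow> (\<forall>j\<in>{1..n}. \<kappa> j \<le> \<kappa> 1) \<longrightarrow> \<kappa> 1 \<ge> M0 \<longrightarrow>
     i \<in> {1..n} \<longrightarrow> l \<in> {1..n} \<longrightarrow> i \<noteq> l \<longrightarrow>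
     (2 - 1 / (3 * real k)) * exp (\<kappa> l) * esym (int k - 2) \<kappa> ({1..n} - {i, l})
     + (2 - 1 / (3 * real k)) * expdq (\<kappa> l) (\<kappa> i) * esym (int k - 1) \<kappa> ({1..n} - {l})
     \<ge> exp (\<kappa> l) / \<kappa> 1 * esym (int k - 1) \<kappa> ({1..n} - {i})"
proof (intro exI[of _ "2 * real k"] allI impI)
  fix \<kappa> :: "nat \<Rightarrow> real" and i l :: nat
  assume G: "Gamma n k \<kappa>" and mx: "\<forall>j\<in>{1..n}. \<kappa> j \<le> \<kappa> 1" and big: "\<kappa> 1 \<ge> 2 * real k"
    and iI: "i \<in> {1..n}" and lI: "l \<in> {1..n}" and il: "i \<noteq> l"
  define I where "I = {1..n}"
  have fI: "finite I" by (simp add: I_def)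
  have cI: "card I = n" by (simp add: I_def)
  have pos: "\<forall>m\<in>{1..k}. esym (int m) \<kappa> I > 0" using G by (simp add: Gamma_def I_def)
  have n2: "n \<ge> 2" using iI lI il by auto
  have k2: "k \<ge> 2" using n2 assms(3) by linarith
  have K4: "\<kappa> 1 \<ge> 4" using big k2 by simp
  define Jl where "Jl = I - {l}"
  have lI': "l \<in> I" using lI by (simp add: I_def)
  have iI': "i \<in> I" using iI by (simp add: I_def)
  have posl: "\<forall>m<k. esym (int m) \<kappa> Jl > 0" unfolding Jl_def by (rule G1[OF fI lI' pos])
  have posl': "\<forall>m\<in>{1..k-1}. esym (int m) \<kappa> Jl > 0" using posl k2 by auto
  have iJl: "i \<in> Jl" using iI' il by (simp add: Jl_def)
  have fJl: "finite Jl" using fI by (simp add: Jl_def)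
  have posil: "\<forall>m<k-1. esym (int m) \<kappa> (Jl - {i}) > 0" by (rule G1[OF fJl iJl posl'])
  define Jil where "Jil = I - {i, l}"
  have Jil_eq: "Jl - {i} = Jil" by (auto simp: Jl_def Jil_def)
  have fJil: "finite Jil" using fI by (simp add: Jil_def)
  have iJil: "i \<notin> Jil" and lJil: "l \<notin> Jil" by (auto simp: Jil_def)
  have Il: "I - {l} = insert i Jil" using iI' il by (auto simp: Jil_def)
  have Ii: "I - {i} = insert l Jil" using lI' il by (auto simp: Jil_def)
  have k22: "int k - 2 = int (k - 2)" "int k - 1 = int (k - 1)" using k2 by auto
  define A where "A = esym (int k - 2) \<kappa> Jil"
  define B where "B = esym (int k - 1) \<kappa> Jil"
  define sl where "sl = esym (int k - 1) \<kappa> (I - {l})"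
  define si where "si = esym (int k - 1) \<kappa> (I - {i})"
  have A0: "A > 0"
  proof -
    have "esym (int (k - 2)) \<kappa> (Jl - {i}) > 0" by (rule posil[rule_format]) (use k2 in simp)
    thus ?thesis unfolding A_def k22 Jil_eq .
  qed
  have sl0: "sl > 0"
  proof -
    have "esym (int (k - 1)) \<kappa> Jl > 0" by (rule posl[rule_format]) (use k2 in simp)
    thus ?thesis unfolding sl_def k22 Jl_def .
  qed
  have m2: "int k - 1 - 1 = int k - 2" by simp
  have slB: "sl = B + \<kappa> i * A"
    unfolding sl_def B_def A_def Il esym_insert[OF fJil iJil] m2 ..
  have siB: "si = B + \<kappa> l * A"
    unfolding si_def B_def A_def Ii esym_insert[OF fJil lJil] m2 ..
  define c where "c = 2 - 1 / (3 * real k)"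
  have c1: "c \<ge> 1" using k2 by (simp add: c_def)
  define K where "K = \<kappa> 1"
  have K0: "K > 0" using K4 by (simp add: K_def)
  define D where "D = expdq (\<kappa> l) (\<kappa> i)"
  define x where "x = exp (\<kappa> l)"
  have x0: "x > 0" by (simp add: x_def)
  have lK: "\<kappa> l \<le> K" using mx lI by (simp add: K_def)
  have goal: "c * x * A + c * D * sl \<ge> x / K * si"
  proof (cases "\<kappa> l \<le> \<kappa> i")
    case True
    have Dx: "D \<ge> x" unfolding D_def x_def by (rule expdq_ge[OF True])
    have "si - sl = (\<kappa> l - \<kappa> i) * A" using siB slB by (simp add: algebra_simps)
    moreover have "(\<kappa> l - \<kappa> i) * A \<le> 0" using True A0 by (simp add: mult_nonpos_nonneg)
    ultimately have sisl: "si \<le> sl" by simp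
    have "x / K * si \<le> x / K * sl" using sisl x0 K0 by (intro mult_left_mono) auto
    also have "\<dots> \<le> x * sl"
    proof -
      have "x / K \<le> x" using x0 K4 by (simp add: K_def divide_le_eq)
      thus ?thesis using sl0 by (intro mult_right_mono) auto
    qed
    also have "\<dots> \<le> c * D * sl"
    proof -
      have "x \<le> c * D" using c1 Dx x0
        by (metis dual_order.trans mult_le_cancel_right1 less_le_not_le order_less_trans)
      thus ?thesis using sl0 by (intro mult_right_mono) auto
    qed
    also have "\<dots> \<le> c * x * A + c * D * sl" using c1 x0 A0 by simp
    finally show ?thesis .
  next
    case False
    hence lt: "\<kappa> i < \<kappa> l" by simp
    define t where "t = \<kappa> l - \<kappa> i"
    have t0: "t > 0" using lt by (simp add: t_def)
    have ckk: "c * K * real k = 2 * K * real k - K / 3" using k2 by (simp add: c_def field_simps)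
    have tb: "1 + t \<le> c * K"
    proof (cases "\<kappa> i \<ge> 0")
      case True
      have "t \<le> K" using True lK by (simp add: t_def)
      moreover have "(1 + K) * real k \<le> c * K * real k"
      proof -
        have h: "2 * K \<le> real k * K" using k2 K0 by (intro mult_right_mono) auto
        have e1: "(1 + K) * real k = real k + real k * K" by (simp add: algebra_simps)
        have e2: "2 * K * real k - K / 3 = 2 * (real k * K) - K / 3" by (simp add: algebra_simps)
        have "2 * real k \<le> K" using big by (simp add: K_def)
        thus ?thesis unfolding ckk e1 e2 using h by linarith
      qed
      ultimately have "(1 + t) * real k \<le> c * K * real k"
        using k2 by (smt (verit) mult_right_mono of_nat_0_le_iff)
      thus ?thesis using k2 by simp
    next
      case False
      have g2: "- \<kappa> i * real k < K * (real (card I) - real k)"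
        unfolding K_def by (rule G2[OF fI iI' pos assms(1)]) (use False mx in \<open>auto simp: I_def\<close>)
      have nk: "real n - real k \<le> real k - 1" using assms(3) by linarith
      have "K * (real n - real k) \<le> K * (real k - 1)" using nk K0 by (intro mult_left_mono) auto
      hence g3: "- \<kappa> i * real k < K * real k - K" using g2 cI by (simp add: algebra_simps)
      have g4: "\<kappa> l * real k \<le> K * real k" using lK k2 by (intro mult_right_mono) auto
      have "(1 + t) * real k = real k + \<kappa> l * real k - \<kappa> i * real k" by (simp add: t_def algebra_simps)
      also have "\<dots> \<le> c * K * real k" unfolding ckk using g3 g4 big by (simp add: K_def)
      finally have "(1 + t) * real k \<le> c * K * real k" .
      thus ?thesis using k2 by simp
    qed
    have Dt: "D * (1 + t) \<ge> x" unfolding D_def x_def t_def by (rule expdq_gt[OF lt])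
    have D0: "D \<ge> 0" using Dt t0 x0 by (smt (verit) mult_nonneg_nonneg zero_le_mult_iff)
    have sisl: "si = sl + t * A" using siB slB by (simp add: t_def algebra_simps)
    have p1: "x / K * (t * A) \<le> c * x * A"
    proof -
      have "t \<le> c * K" using tb by simp
      hence "t / K \<le> c" using K0 by (simp add: divide_le_eq)
      hence "t / K * (x * A) \<le> c * (x * A)" using x0 A0 by (intro mult_right_mono) auto
      thus ?thesis by (simp add: algebra_simps)
    qed
    have p2: "x / K * sl \<le> c * D * sl"
    proof -
      have "x \<le> D * (c * K)" using Dt tb D0 by (smt (verit) mult_left_mono)
      hence "x / K \<le> c * D" using K0 by (simp add: divide_le_eq algebra_simps)
      thus ?thesis using sl0 by (intro mult_right_mono) auto
    qed
    show ?thesis using p1 p2 sisl by (simp add: distrib_left)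
  qed
  thus "(2 - 1 / (3 * real k)) * exp (\<kappa> l) * esym (int k - 2) \<kappa> ({1..n} - {i, l})
     + (2 - 1 / (3 * real k)) * expdq (\<kappa> l) (\<kappa> i) * esym (int k - 1) \<kappa> ({1..n} - {l})
     \<ge> exp (\<kappa> l) / \<kappa> 1 * esym (int k - 1) \<kappa> ({1..n} - {i})"
    unfolding c_def x_def A_def D_def sl_def si_def K_def Jil_def I_def .
qed

end
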